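(* Let $\nu$ be a probability measure on $\mathbb R$ not supported on a single point, and let $\mathcal I\subseteq\mathbb R$ be an open interval such that $Y(\theta)=\int e^{\theta x}\nu(dx)<\infty$ for all $\theta\in\mathcal I$. For $\theta\in\mathcal I$ let $\nu^\theta(dx)=Y(\theta)^{-1}e^{\theta x}\nu(dx)$, let $\varrho(\theta)=\int x\,\nu^\theta(dx)$, which maps $\mathcal I$ continuously and strictly increasingly onto an open interval $\mathcal J$, and let $\theta(\varrho)$ be its inverse. Let $\psi$ be a measurable function on $\mathbb R$ with $\int|\psi|d\nu^\theta<\infty$ for all $\theta\in\mathcal I$, and define $\Psi(\varrho)=\int\psi\,d\nu^{\theta(\varrho)}$ for $\varrho\in\mathcal J$ (an infinitely differentiable function). If $\psi$ is convex on $\mathbb R$, then $\Psi$ is convex on $\mathcal J$. If moreover there is no affine function $g(x)=ax+b$ with $\psi=g$ $\nu$-a.e., then $\Psi''(\varrho)>0$ for all $\varrho\in\mathcal J$, and in particular $\Psi$ is strictly convex on $\mathcal J$. *)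

theory Defs
  imports "HOL-Probability.Probability"
begin

definition tilt_Y :: "real measure \<Rightarrow> real \<Rightarrow> real" where
  "tilt_Y \<nu> \<theta> = (\<integral>x. exp (\<theta> * x) \<partial>\<nu>)"

definition tilt :: "real measure \<Rightarrow> real \<Rightarrow> real measure" where
  "tilt \<nu> \<theta> = density \<nu> (\<lambda>x. ennreal (exp (\<theta> * x) / tilt_Y \<nu> \<theta>))"

definition tilt_mean :: "real measure \<Rightarrow> real \<Rightarrow> real" where
  "tilt_mean \<nu> \<theta> = (\<integral>x. x \<partial>(tilt \<nu> \<theta>))"

definition tilt_Psi :: "real measure \<Rightarrow> real set \<Rightarrow> (real \<Rightarrow> real) \<Rightarrow> real \<Rightarrow> real" where
  "tilt_Psi \<nu> I \<psi> r = (\<integral>x. \<psi> x \<partial>(tilt \<nu> (the_inv_into I (tilt_mean \<nu>) r)))"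

definition strictly_convex_on :: "real set \<Rightarrow> (real \<Rightarrow> real) \<Rightarrow> bool" where
  "strictly_convex_on S f \<longleftrightarrow>
     (\<forall>x\<in>S. \<forall>y\<in>S. \<forall>t. x \<noteq> y \<and> 0 < t \<and> t < 1 \<longrightarrow>
        f ((1 - t) * x + t * y) < (1 - t) * f x + t * f y)"

end

theory Submission
  imports Defs
begin


lemma exp_taylor2_bound:
  fixes u :: real
  shows "\<bar>exp u - 1 - u\<bar> \<le> u^2 * exp \<bar>u\<bar>"
proof -
  obtain t where t: "\<bar>t\<bar> \<le> \<bar>u\<bar>" "exp u = (\<Sum>m<2. (u ^ m) / fact m) + (exp t / fact 2) * u ^ 2"
    using Maclaurin_exp_le[of u 2] by blast
  have e: "exp u - 1 - u = exp t / 2 * u^2" using t(2) by (simp add: numeral_2_eq_2)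
  have "exp t \<le> exp \<bar>u\<bar>" using t(1) by simp
  hence "exp t / 2 * u^2 \<le> u^2 * exp \<bar>u\<bar>"
  proof -
    have "exp t / 2 \<le> exp \<bar>u\<bar>" using \<open>exp t \<le> exp \<bar>u\<bar>\<close> exp_gt_zero[of t] by linarith
    from mult_right_mono[OF this zero_le_power2[of u]] show ?thesis by (simp add: mult.commute)
  qed
  thus ?thesis by (subst e, subst abs_of_nonneg) simp_all
qed

lemma abs_le_exp_sum:
  fixes d x :: real assumes "d > 0"
  shows "d * \<bar>x\<bar> \<le> exp (d*x) + exp (-(d*x))"
proof -
  have "d * \<bar>x\<bar> \<le> exp (d*\<bar>x\<bar>)" using exp_ge_add_one_self[of "d*\<bar>x\<bar>"] by linarith
  moreover have "exp (d*\<bar>x\<bar>) \<le> exp (d*x) + exp (-(d*x))"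
    using assms by (cases "x \<ge> 0") (auto simp: abs_if add_increasing add_increasing2)
  ultimately show ?thesis using assms by simp
qed

lemma exp_abs_le_sum:
  fixes x :: real
  shows "exp \<bar>x\<bar> \<le> exp x + exp (-x)"
  by (cases "x \<ge> 0") (auto simp: abs_if add_increasing add_increasing2)


lemma strict_convex_from_f'':
  fixes f :: "real \<Rightarrow> real"
  assumes C: "convex C"
    and f': "\<And>x. x \<in> C \<Longrightarrow> DERIV f x :> f' x"
    and f'': "\<And>x. x \<in> C \<Longrightarrow> DERIV f' x :> f'' x"
    and pos: "\<And>x. x \<in> C \<Longrightarrow> f'' x > 0"
  shows "strictly_convex_on C f"
proof -
  have seg: "{a..b} \<subseteq> C" if "a \<in> C" "b \<in> C" "a < b" for a b
    using atMostAtLeast_subset_convex[OF C that] .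
  have inc: "f' a < f' b" if "a \<in> C" "b \<in> C" "a < b" for a b
  proof -
    have "\<And>s. a \<le> s \<Longrightarrow> s \<le> b \<Longrightarrow> DERIV f' s :> f'' s" using seg[OF that] f'' by auto
    from MVT2[OF \<open>a < b\<close> this] obtain z where z: "a < z" "z < b" "f' b - f' a = (b - a) * f'' z"
      by blast
    have "z \<in> C" using seg[OF that] z by auto
    hence "f'' z > 0" by (rule pos)
    hence "(b - a) * f'' z > 0" using that by (simp add: mult_pos_pos)
    thus ?thesis using z by linarith
  qed
  have main: "f ((1 - t) * x + t * y) < (1 - t) * f x + t * f y"
    if xy: "x \<in> C" "y \<in> C" "x < y" and t: "0 < t" "t < 1" for x y t :: real
  proof -
    define z where "z = (1 - t) * x + t * y"
    have zx: "z - x = t * (y - x)" and yz: "y - z = (1 - t) * (y - x)" by (simp_all add: z_def algebra_simps)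
    have "t * (y - x) > 0" using t xy by simp
    hence xz: "x < z" using zx by linarith
    have "(1 - t) * (y - x) > 0" using t xy by simp
    hence zy: "z < y" using yz by linarith
    have zC: "z \<in> C" using seg[OF xy] xz zy by auto
    have "\<And>s. x \<le> s \<Longrightarrow> s \<le> z \<Longrightarrow> DERIV f s :> f' s" using seg[OF xy(1) zC xz] f' by auto
    from MVT2[OF xz this] obtain a where a: "x < a" "a < z" "f z - f x = (z - x) * f' a"
      by blast
    have "\<And>s. z \<le> s \<Longrightarrow> s \<le> y \<Longrightarrow> DERIV f s :> f' s" using seg[OF zC xy(2) zy] f' by auto
    from MVT2[OF zy this] obtain b where b: "z < b" "b < y" "f y - f z = (y - z) * f' b"
      by blast
    have aC: "a \<in> C" using seg[OF xy] a zy by auto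
    have bC: "b \<in> C" using seg[OF xy] b xz by auto
    have "f' a < f' b" using inc[OF aC bC] a b by simp
    have h0: "(1 - t) * f x + t * f y - f z = (1 - t) * (f x - f z) + t * (f y - f z)" by algebra
    have h1: "f x - f z = - (t * (y - x)) * f' a" using a(3) zx by (simp add: algebra_simps)
    have h2: "f y - f z = (1 - t) * (y - x) * f' b" using b(3) yz by simp
    have "(1 - t) * (f x - f z) + t * (f y - f z) = (1 - t) * (- (t * (y - x)) * f' a) + t * ((1 - t) * (y - x) * f' b)"
      by (simp only: h1 h2)
    also have "\<dots> = t * (1 - t) * (y - x) * (f' b - f' a)" by algebra
    also have "\<dots> > 0" using t xy \<open>f' a < f' b\<close> by (simp add: mult_pos_pos)
    finally have "(1 - t) * f x + t * f y - f z > 0" using h0 by simp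
    thus ?thesis unfolding z_def by simp
  qed
  show ?thesis unfolding strictly_convex_on_def
  proof (intro ballI allI impI)
    fix x y and t :: real assume xy: "x \<in> C" "y \<in> C" and h: "x \<noteq> y \<and> 0 < t \<and> t < 1"
    show "f ((1 - t) * x + t * y) < (1 - t) * f x + t * f y"
    proof (cases "x < y")
      case True thus ?thesis using main xy h by blast
    next
      case False
      hence "y < x" using h by simp
      from main[OF xy(2,1) this, of "1 - t"] h
      show ?thesis by (simp add: algebra_simps)
    qed
  qed
qed



lemma convex_between_neg:
  fixes \<phi> :: "real \<Rightarrow> real"
  assumes cvx: "convex_on UNIV \<phi>" and "y \<le> x" "x \<le> z" "\<phi> y < 0" "\<phi> z < 0"
  shows "\<phi> x < 0"
proof (cases "y = z")
  case True thus ?thesis using assms by (metis order_antisym)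
next
  case False
  hence yz: "y < z" using assms by simp
  define t where "t = (x - y) / (z - y)"
  have t0: "0 \<le> t" and t1: "t \<le> 1" using assms yz by (auto simp: t_def divide_simps)
  have tz: "t * (z - y) = x - y" using yz by (simp add: t_def)
  have xe: "(1 - t) *\<^sub>R y + t *\<^sub>R z = x" using tz by (simp add: algebra_simps)
  have "\<phi> x \<le> (1 - t) * \<phi> y + t * \<phi> z"
    using convex_onD[OF cvx t0 t1, of y z] xe by simp
  also have "\<dots> < 0"
  proof -
    have "(1 - t) * \<phi> y \<le> 0" using t1 assms by (simp add: mult_nonneg_nonpos)
    moreover have "t * \<phi> z \<le> 0" using t0 assms by (simp add: mult_nonneg_nonpos)
    moreover have "(1 - t) * \<phi> y < 0 \<or> t * \<phi> z < 0"
      using t0 t1 assms by (cases "t = 0") (auto simp: mult_pos_neg)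
    ultimately show ?thesis by linarith
  qed
  finally show ?thesis .
qed

lemma AE_nonneg_from_zero_integral:
  fixes \<phi> g :: "real \<Rightarrow> real"
  assumes "integrable \<mu> g" "\<And>x. g x \<ge> 0" "\<And>x. \<phi> x < 0 \<Longrightarrow> g x > 0" "(\<integral>x. g x \<partial>\<mu>) = 0"
  shows "AE x in \<mu>. \<phi> x \<ge> 0"
proof -
  have "AE x in \<mu>. g x = 0"
    using integral_nonneg_eq_0_iff_AE[of \<mu> g] assms by auto
  thus ?thesis by (rule eventually_mono) (metis assms(3) less_irrefl not_le)
qed

lemma convex_moment_pos:
  fixes \<mu> :: "real measure" and \<phi> :: "real \<Rightarrow> real"
  assumes cvx: "convex_on UNIV \<phi>"
    and i0: "integrable \<mu> \<phi>" and i1: "integrable \<mu> (\<lambda>x. \<phi> x * x)"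
    and i2: "integrable \<mu> (\<lambda>x. \<phi> x * x^2)"
    and e0: "(\<integral>x. \<phi> x \<partial>\<mu>) = 0" and e1: "(\<integral>x. \<phi> x * x \<partial>\<mu>) = 0"
  shows "(AE x in \<mu>. \<phi> x = 0) \<or> (\<integral>x. \<phi> x * x^2 \<partial>\<mu>) > 0"
proof (cases "AE x in \<mu>. \<phi> x \<ge> 0")
  case True
  thus ?thesis using integral_nonneg_eq_0_iff_AE[OF i0] e0 by auto
next
  case notAE: False
  define N where "N = {x. \<phi> x < 0}"
  have Nne: "N \<noteq> {}"
  proof
    assume "N = {}"
    hence "\<forall>x. \<phi> x \<ge> 0" by (auto simp: N_def not_less)
    thus False using notAE by auto
  qed
  have contph: "continuous_on UNIV \<phi>" using convex_on_continuous[OF open_UNIV cvx] .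
  have openN: "open N" unfolding N_def
    using open_Collect_less[OF contph continuous_on_const[of UNIV 0]] by simp
  have btw: "x \<in> N" if "y \<in> N" "z \<in> N" "y \<le> x" "x \<le> z" for x y z
    using convex_between_neg[OF cvx, of y x z] that by (auto simp: N_def)
  have inNlow: "\<exists>y\<in>N. y < x" if "x \<in> N" for x
  proof -
    have "\<exists>e>0. ball x e \<subseteq> N" using openN that by (simp add: open_contains_ball)
    then obtain e where e: "e > 0" "ball x e \<subseteq> N" by auto
    have "x - e/2 \<in> ball x e" using e(1) by (simp add: dist_real_def)
    hence "x - e/2 \<in> N" by (rule subsetD[OF e(2)])
    thus ?thesis using e(1) by (intro bexI[of _ "x - e/2"]) simp_all
  qed
  have inNhigh: "\<exists>y\<in>N. y > x" if "x \<in> N" for x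
  proof -
    have "\<exists>e>0. ball x e \<subseteq> N" using openN that by (simp add: open_contains_ball)
    then obtain e where e: "e > 0" "ball x e \<subseteq> N" by auto
    have "x + e/2 \<in> ball x e" using e(1) by (simp add: dist_real_def)
    hence "x + e/2 \<in> N" by (rule subsetD[OF e(2)])
    thus ?thesis using e(1) by (intro bexI[of _ "x + e/2"]) simp_all
  qed
  have contra: "False" if "integrable \<mu> g" "\<And>x. g x \<ge> 0" "\<And>x. x \<in> N \<Longrightarrow> g x > 0"
      "(\<integral>x. g x \<partial>\<mu>) = 0" for g :: "real \<Rightarrow> real"
    using AE_nonneg_from_zero_integral[of \<mu> g \<phi>] that notAE by (auto simp: N_def)
  show ?thesis
  proof (cases "bdd_below N")
    case bb: True
    define a where "a = Inf N"
    have a_lt: "a < x" if xN: "x \<in> N" for x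
    proof -
      obtain y where "y \<in> N" "y < x" using inNlow[OF xN] by blast
      moreover have "a \<le> y" unfolding a_def using cInf_lower[OF \<open>y \<in> N\<close> bb] .
      ultimately show ?thesis by linarith
    qed
    show ?thesis
    proof (cases "bdd_above N")
      case ba: True
      define b where "b = Sup N"
      have b_gt: "x < b" if xN: "x \<in> N" for x
      proof -
        obtain y where "y \<in> N" "x < y" using inNhigh[OF xN] by blast
        moreover have "y \<le> b" unfolding b_def using cSup_upper[OF \<open>y \<in> N\<close> ba] .
        ultimately show ?thesis by linarith
      qed
      have outN: "x \<le> a \<or> b \<le> x" if "x \<notin> N" for x
      proof (rule ccontr)
        assume "\<not> (x \<le> a \<or> b \<le> x)"
        hence "a < x" "x < b" by auto
        then obtain y z where "y \<in> N" "y < x" "z \<in> N" "x < z"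
          using cInf_less_iff[OF Nne bb] less_cSup_iff[OF Nne ba] unfolding a_def b_def by blast
        thus False using btw[of y z x] that by (simp add: less_imp_le)
      qed
      define g where "g x = \<phi> x * x^2 - (a + b) * (\<phi> x * x) + (a * b) * \<phi> x" for x
      have gq: "g x = \<phi> x * ((x - a) * (x - b))" for x by (simp add: g_def algebra_simps power2_eq_square)
      have ig: "integrable \<mu> g" unfolding g_def using i0 i1 i2 by auto
      have intg: "(\<integral>x. g x \<partial>\<mu>) = (\<integral>x. \<phi> x * x^2 \<partial>\<mu>)"
        unfolding g_def using i0 i1 i2 e0 e1 by simp
      have gnn: "g x \<ge> 0" for x
      proof (cases "x \<in> N")
        case True
        hence "\<phi> x < 0" "(x - a) * (x - b) < 0" using a_lt b_gt by (auto simp: N_def mult_pos_neg)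
        thus ?thesis unfolding gq by (simp add: mult_neg_neg less_imp_le)
      next
        case False
        hence "\<phi> x \<ge> 0" by (auto simp: N_def)
        moreover have "(x - a) * (x - b) \<ge> 0"
        proof -
          obtain x0 where "x0 \<in> N" using Nne by blast
          have ab: "a < b" using a_lt[OF \<open>x0 \<in> N\<close>] b_gt[OF \<open>x0 \<in> N\<close>] by linarith
          from outN[OF False] show ?thesis
          proof
            assume "x \<le> a" hence "x - a \<le> 0" "x - b \<le> 0" using ab by linarith+
            thus ?thesis by (rule mult_nonpos_nonpos)
          next
            assume "b \<le> x" hence "x - a \<ge> 0" "x - b \<ge> 0" using ab by linarith+
            thus ?thesis by (rule mult_nonneg_nonneg)
          qed
        qed
        ultimately show ?thesis unfolding gq by simp
      qed
      have gpos: "g x > 0" if "x \<in> N" for x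
      proof -
        have "\<phi> x < 0" "(x - a) * (x - b) < 0" using that a_lt b_gt by (auto simp: N_def mult_pos_neg)
        thus ?thesis unfolding gq by (simp add: mult_neg_neg)
      qed
      have "(\<integral>x. g x \<partial>\<mu>) \<ge> 0" using gnn by (simp add: integral_nonneg)
      moreover have "(\<integral>x. g x \<partial>\<mu>) \<noteq> 0" using contra[OF ig gnn gpos] by blast
      ultimately show ?thesis using intg by simp
    next
      case nba: False
      have above: "\<exists>z\<in>N. x < z" for x using nba by (auto simp: bdd_above_def not_le)
      have outN: "x \<le> a" if "x \<notin> N" for x
      proof (rule ccontr)
        assume "\<not> x \<le> a"
        hence "Inf N < x" unfolding a_def by simp
        then obtain y where "y \<in> N" "y < x" using cInf_less_iff[OF Nne bb] by blast
        moreover obtain z where "z \<in> N" "x < z" using above by blast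
        ultimately show False using btw[of y z x] that by (simp add: less_imp_le)
      qed
      define g where "g x = a * \<phi> x - \<phi> x * x" for x
      have gq: "g x = - \<phi> x * (x - a)" for x by (simp add: g_def algebra_simps)
      have ig: "integrable \<mu> g" unfolding g_def using i0 i1 by auto
      have intg: "(\<integral>x. g x \<partial>\<mu>) = 0" unfolding g_def using i0 i1 e0 e1 by simp
      have gpos: "g x > 0" if xN: "x \<in> N" for x
      proof -
        have "\<phi> x < 0" "x - a > 0" using xN a_lt[OF xN] by (auto simp: N_def)
        hence "\<phi> x * (x - a) < 0" by (rule mult_neg_pos)
        thus ?thesis unfolding gq by simp
      qed
      have gnn: "g x \<ge> 0" for x
      proof (cases "x \<in> N")
        case True thus ?thesis using gpos[OF True] by simp
      next
        case False
        hence "\<phi> x \<ge> 0" "x - a \<le> 0" using outN[OF False] by (auto simp: N_def)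
        hence "\<phi> x * (x - a) \<le> 0" by (rule mult_nonneg_nonpos)
        thus ?thesis unfolding gq by simp
      qed
      show ?thesis using contra[OF ig gnn gpos intg] by blast
    qed
  next
    case nbb: False
    have below: "\<exists>z\<in>N. z < x" for x using nbb by (auto simp: bdd_below_def not_le)
    show ?thesis
    proof (cases "bdd_above N")
      case ba: True
      define b where "b = Sup N"
      have b_gt: "x < b" if xN: "x \<in> N" for x
      proof -
        obtain y where "y \<in> N" "x < y" using inNhigh[OF xN] by blast
        moreover have "y \<le> b" unfolding b_def using cSup_upper[OF \<open>y \<in> N\<close> ba] .
        ultimately show ?thesis by linarith
      qed
      have outN: "b \<le> x" if "x \<notin> N" for x
      proof (rule ccontr)
        assume "\<not> b \<le> x"
        hence "x < Sup N" unfolding b_def by simp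
        then obtain z where "z \<in> N" "x < z" using less_cSup_iff[OF Nne ba] by blast
        moreover obtain y where "y \<in> N" "y < x" using below by blast
        ultimately show False using btw[of y z x] that by (simp add: less_imp_le)
      qed
      define g where "g x = \<phi> x * x - b * \<phi> x" for x
      have gq: "g x = \<phi> x * (x - b)" for x by (simp add: g_def algebra_simps)
      have ig: "integrable \<mu> g" unfolding g_def using i0 i1 by auto
      have intg: "(\<integral>x. g x \<partial>\<mu>) = 0" unfolding g_def using i0 i1 e0 e1 by simp
      have gpos: "g x > 0" if xN: "x \<in> N" for x
      proof -
        have "\<phi> x < 0" "x - b < 0" using xN b_gt[OF xN] by (auto simp: N_def)
        hence "\<phi> x * (x - b) > 0" by (rule mult_neg_neg)
        thus ?thesis unfolding gq by simp
      qed
      have gnn: "g x \<ge> 0" for x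
      proof (cases "x \<in> N")
        case True thus ?thesis using gpos[OF True] by simp
      next
        case False
        hence "\<phi> x \<ge> 0" "x - b \<ge> 0" using outN[OF False] by (auto simp: N_def)
        hence "\<phi> x * (x - b) \<ge> 0" by (rule mult_nonneg_nonneg)
        thus ?thesis unfolding gq by simp
      qed
      show ?thesis using contra[OF ig gnn gpos intg] by blast
    next
      case nba: False
      have above: "\<exists>z\<in>N. x < z" for x using nba by (auto simp: bdd_above_def not_le)
      have allN: "x \<in> N" for x
      proof -
        obtain y z where "y \<in> N" "y < x" "z \<in> N" "x < z" using above below by blast
        thus ?thesis using btw[of y z x] by (simp add: less_imp_le)
      qed
      define g where "g x = - \<phi> x" for x
      have ig: "integrable \<mu> g" unfolding g_def using i0 by auto
      have intg: "(\<integral>x. g x \<partial>\<mu>) = 0" unfolding g_def using e0 by simp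
      have gnn: "g x \<ge> 0" for x using allN[of x] by (simp add: g_def N_def)
      have gpos: "g x > 0" if "x \<in> N" for x using that by (simp add: g_def N_def)
      show ?thesis using contra[OF ig gnn gpos intg] by blast
    qed
  qed
qed

lemma pt_bound1:
  fixes H x \<theta> d :: real assumes d: "d > 0"
  shows "\<bar>x * H * exp (\<theta> * x)\<bar> \<le> (\<bar>H * exp ((\<theta> + d) * x)\<bar> + \<bar>H * exp ((\<theta> - d) * x)\<bar>) / d"
proof -
  have "d * \<bar>x\<bar> \<le> exp (d*x) + exp (-(d*x))" using abs_le_exp_sum[OF d] .
  hence "d * \<bar>x\<bar> * exp (\<theta> * x) \<le> (exp (d*x) + exp (-(d*x))) * exp (\<theta> * x)"
    by (rule mult_right_mono) simp
  also have "\<dots> = exp ((\<theta> + d) * x) + exp ((\<theta> - d) * x)"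
    by (simp add: distrib_right exp_add[symmetric] algebra_simps)
  finally have "\<bar>H\<bar> * (d * \<bar>x\<bar> * exp (\<theta> * x)) \<le> \<bar>H\<bar> * (exp ((\<theta> + d) * x) + exp ((\<theta> - d) * x))"
    by (rule mult_left_mono) simp
  hence "d * \<bar>x * H * exp (\<theta> * x)\<bar> \<le> \<bar>H * exp ((\<theta> + d) * x)\<bar> + \<bar>H * exp ((\<theta> - d) * x)\<bar>"
    by (simp add: abs_mult algebra_simps)
  thus ?thesis using d by (simp add: field_simps)
qed

lemma pt_bound2:
  fixes H x \<theta> d t :: real assumes d: "d > 0" and td: "\<bar>t - \<theta>\<bar> \<le> d"
  shows "\<bar>H * exp (t * x) - H * exp (\<theta> * x) - (t - \<theta>) * (x * H * exp (\<theta> * x))\<bar>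
     \<le> (t - \<theta>)^2 * (\<bar>x^2 * H\<bar> * (exp ((\<theta> + d) * x) + exp ((\<theta> - d) * x)))"
proof -
  define u where "u = (t - \<theta>) * x"
  have et: "exp (t * x) = exp (\<theta> * x) * exp u" unfolding u_def by (simp add: exp_add[symmetric] algebra_simps)
  have "H * exp (t * x) - H * exp (\<theta> * x) - (t - \<theta>) * (x * H * exp (\<theta> * x))
        = H * exp (\<theta> * x) * (exp u - 1 - u)" unfolding et u_def by (simp add: algebra_simps)
  hence "\<bar>H * exp (t * x) - H * exp (\<theta> * x) - (t - \<theta>) * (x * H * exp (\<theta> * x))\<bar>
        = \<bar>H\<bar> * exp (\<theta> * x) * \<bar>exp u - 1 - u\<bar>" by (simp add: abs_mult)
  also have "\<dots> \<le> \<bar>H\<bar> * exp (\<theta> * x) * (u^2 * exp \<bar>u\<bar>)"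
    by (rule mult_left_mono[OF exp_taylor2_bound]) simp
  also have "\<dots> \<le> \<bar>H\<bar> * exp (\<theta> * x) * (u^2 * (exp (d*x) + exp (-(d*x))))"
  proof -
    have "\<bar>u\<bar> \<le> \<bar>d * x\<bar>" unfolding u_def using td d by (simp add: abs_mult mult_right_mono)
    hence "exp \<bar>u\<bar> \<le> exp \<bar>d * x\<bar>" by simp
    also have "\<dots> \<le> exp (d*x) + exp (-(d*x))" by (rule exp_abs_le_sum)
    finally have "exp \<bar>u\<bar> \<le> exp (d*x) + exp (-(d*x))" .
    hence "u^2 * exp \<bar>u\<bar> \<le> u^2 * (exp (d*x) + exp (-(d*x)))" by (rule mult_left_mono) simp
    thus ?thesis by (rule mult_left_mono) simp
  qed
  also have "\<dots> = (t - \<theta>)^2 * (\<bar>x^2 * H\<bar> * (exp ((\<theta> + d) * x) + exp ((\<theta> - d) * x)))"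
  proof -
    have u2: "u^2 = (t - \<theta>)^2 * x^2" unfolding u_def by (simp add: power_mult_distrib)
    have ax: "\<bar>x^2 * H\<bar> = x^2 * \<bar>H\<bar>" by (simp add: abs_mult)
    have e1: "exp ((\<theta> + d) * x) = exp (\<theta> * x) * exp (d * x)" by (simp add: exp_add[symmetric] algebra_simps)
    have e2: "exp ((\<theta> - d) * x) = exp (\<theta> * x) * exp (-(d * x))" by (simp add: exp_add[symmetric] algebra_simps)
    show ?thesis unfolding u2 ax e1 e2 by algebra
  qed
  finally show ?thesis .
qed

definition GG :: "real measure \<Rightarrow> (real \<Rightarrow> real) \<Rightarrow> real \<Rightarrow> real" where
  "GG \<nu> h \<theta> = (\<integral>x. h x * exp (\<theta> * x) \<partial>\<nu>)"

locale tiltctx =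
  fixes \<nu> :: "real measure" and I :: "real set"
  assumes prob: "prob_space \<nu>" and sets_eq: "sets \<nu> = sets borel" and openI: "open I"
    and intexp: "\<forall>\<theta>\<in>I. integrable \<nu> (\<lambda>x. exp (\<theta> * x))"
begin

definition good :: "(real \<Rightarrow> real) \<Rightarrow> bool" where
  "good h \<longleftrightarrow> h \<in> borel_measurable borel \<and> (\<forall>\<theta>\<in>I. integrable \<nu> (\<lambda>x. h x * exp (\<theta> * x)))"

lemma meas: fixes f :: "real \<Rightarrow> real" assumes "f \<in> borel_measurable borel" shows "f \<in> borel_measurable \<nu>"
  using assms by (subst measurable_cong_sets[OF sets_eq refl]) assumption

lemma good_1: "good (\<lambda>_. 1)"
  using intexp by (simp add: good_def)

lemma cball_in: assumes "\<theta> \<in> I" obtains d where "d > 0" "\<theta> + d \<in> I" "\<theta> - d \<in> I" "\<And>t. \<bar>t - \<theta>\<bar> \<le> d \<Longrightarrow> t \<in> I"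
proof -
  obtain d where d: "d > 0" "cball \<theta> d \<subseteq> I" using openI assms open_contains_cball by blast
  have dI: "\<And>t. \<bar>t - \<theta>\<bar> \<le> d \<Longrightarrow> t \<in> I" using d(2) by (auto simp: dist_real_def subset_iff)
  have p: "\<theta> + d \<in> I" using dI d(1) by simp
  have m: "\<theta> - d \<in> I" using dI d(1) by simp
  show ?thesis by (rule that[OF d(1) p m dI])
qed

lemma good_x: assumes "good h" shows "good (\<lambda>x. x * h x)"
  unfolding good_def
proof (intro conjI ballI)
  have hm[measurable]: "h \<in> borel_measurable borel" using assms by (simp add: good_def)
  show "(\<lambda>x. x * h x) \<in> borel_measurable borel" by measurable
  fix \<theta> assume th: "\<theta> \<in> I"
  obtain d where d: "d > 0" "\<theta> + d \<in> I" "\<theta> - d \<in> I" using cball_in[OF th] by blast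
  have i1: "integrable \<nu> (\<lambda>x. h x * exp ((\<theta> + d) * x))" using assms d by (simp add: good_def)
  have i2: "integrable \<nu> (\<lambda>x. h x * exp ((\<theta> - d) * x))" using assms d by (simp add: good_def)
  have ib: "integrable \<nu> (\<lambda>x. (\<bar>h x * exp ((\<theta> + d) * x)\<bar> + \<bar>h x * exp ((\<theta> - d) * x)\<bar>) / d)"
    using i1 i2 by auto
  have mb: "(\<lambda>x. x * h x * exp (\<theta> * x)) \<in> borel_measurable \<nu>" by (rule meas) measurable
  have ae: "AE x in \<nu>. norm (x * h x * exp (\<theta> * x)) \<le> norm ((\<bar>h x * exp ((\<theta> + d) * x)\<bar> + \<bar>h x * exp ((\<theta> - d) * x)\<bar>) / d)"
  proof (rule AE_I2)
    fix x
    have "\<bar>x * h x * exp (\<theta> * x)\<bar> \<le> (\<bar>h x * exp ((\<theta> + d) * x)\<bar> + \<bar>h x * exp ((\<theta> - d) * x)\<bar>) / d"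
      by (rule pt_bound1[OF d(1)])
    also have "\<dots> \<le> \<bar>(\<bar>h x * exp ((\<theta> + d) * x)\<bar> + \<bar>h x * exp ((\<theta> - d) * x)\<bar>) / d\<bar>" by (rule abs_ge_self)
    finally show "norm (x * h x * exp (\<theta> * x)) \<le> norm ((\<bar>h x * exp ((\<theta> + d) * x)\<bar> + \<bar>h x * exp ((\<theta> - d) * x)\<bar>) / d)"
      by (simp only: real_norm_def)
  qed
  show "integrable \<nu> (\<lambda>x. x * h x * exp (\<theta> * x))"
    by (rule Bochner_Integration.integrable_bound[OF ib mb ae])
qed

lemma good_pow: assumes "good h" shows "good (\<lambda>x. x^k * h x)"
proof (induction k)
  case 0 thus ?case using assms by simp
next
  case (Suc k)
  from good_x[OF Suc] show ?case by (simp add: mult.assoc)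
qed

lemma G_deriv: assumes g: "good h" and th: "\<theta> \<in> I"
  shows "(GG \<nu> h has_real_derivative GG \<nu> (\<lambda>x. x * h x) \<theta>) (at \<theta>)"
proof -
  obtain d where d: "d > 0" "\<theta> + d \<in> I" "\<theta> - d \<in> I" and dI: "\<And>t. \<bar>t - \<theta>\<bar> \<le> d \<Longrightarrow> t \<in> I"
    using cball_in[OF th] by blast
  have g2: "good (\<lambda>x. x^2 * h x)" using good_pow[OF g] .
  have hm[measurable]: "h \<in> borel_measurable borel" using g by (simp add: good_def)
  define k where "k x = \<bar>x^2 * h x\<bar> * (exp ((\<theta> + d) * x) + exp ((\<theta> - d) * x))" for x
  have k_eq: "k x = \<bar>x^2 * h x * exp ((\<theta> + d) * x)\<bar> + \<bar>x^2 * h x * exp ((\<theta> - d) * x)\<bar>" for x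
    by (simp add: k_def abs_mult algebra_simps)
  have ia: "integrable \<nu> (\<lambda>x. x^2 * h x * exp ((\<theta> + d) * x))" using g2 d(2) unfolding good_def by blast
  have ib: "integrable \<nu> (\<lambda>x. x^2 * h x * exp ((\<theta> - d) * x))" using g2 d(3) unfolding good_def by blast
  have kf: "k = (\<lambda>x. \<bar>x^2 * h x * exp ((\<theta> + d) * x)\<bar> + \<bar>x^2 * h x * exp ((\<theta> - d) * x)\<bar>)"
    by (rule ext) (rule k_eq)
  have ik: "integrable \<nu> k" unfolding kf by (intro Bochner_Integration.integrable_add integrable_abs ia ib)
  define K where "K = (\<integral>x. k x \<partial>\<nu>)"
  have igt: "integrable \<nu> (\<lambda>x. h x * exp (t * x))" if "t \<in> I" for t using g that by (simp add: good_def)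
  have igx: "integrable \<nu> (\<lambda>x. x * h x * exp (\<theta> * x))" using good_x[OF g] th by (simp add: good_def)
  have est: "\<bar>GG \<nu> h t - GG \<nu> h \<theta> - (t - \<theta>) * GG \<nu> (\<lambda>x. x * h x) \<theta>\<bar> \<le> (t - \<theta>)^2 * K"
    if td: "\<bar>t - \<theta>\<bar> \<le> d" for t
  proof -
    have tI: "t \<in> I" using dI td .
    have "GG \<nu> h t - GG \<nu> h \<theta> - (t - \<theta>) * GG \<nu> (\<lambda>x. x * h x) \<theta>
       = (\<integral>x. h x * exp (t * x) - h x * exp (\<theta> * x) - (t - \<theta>) * (x * h x * exp (\<theta> * x)) \<partial>\<nu>)"
      unfolding GG_def using igt[OF tI] igt[OF th] igx by simp
    also have "\<bar>\<dots>\<bar> \<le> (\<integral>x. (t - \<theta>)^2 * k x \<partial>\<nu>)"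
    proof (rule integral_abs_bound_integral)
      show "integrable \<nu> (\<lambda>x. h x * exp (t * x) - h x * exp (\<theta> * x) - (t - \<theta>) * (x * h x * exp (\<theta> * x)))"
        using igt[OF tI] igt[OF th] igx by auto
      show "integrable \<nu> (\<lambda>x. (t - \<theta>)^2 * k x)" using ik by simp
      fix x show "\<bar>h x * exp (t * x) - h x * exp (\<theta> * x) - (t - \<theta>) * (x * h x * exp (\<theta> * x))\<bar> \<le> (t - \<theta>)^2 * k x"
        unfolding k_def by (rule pt_bound2[OF d(1) td])
    qed
    also have "\<dots> = (t - \<theta>)^2 * K" unfolding K_def by simp
    finally show ?thesis .
  qed
  show ?thesis unfolding has_field_derivative_iff LIM_eq
  proof (intro allI impI)
    fix r :: real assume r: "r > 0"
    define s where "s = min d (r / (\<bar>K\<bar> + 1))"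
    have s: "s > 0" using r d by (simp add: s_def)
    show "\<exists>s>0. \<forall>t. t \<noteq> \<theta> \<and> norm (t - \<theta>) < s \<longrightarrow>
        norm ((GG \<nu> h t - GG \<nu> h \<theta>) / (t - \<theta>) - GG \<nu> (\<lambda>x. x * h x) \<theta>) < r"
    proof (intro exI[of _ s] conjI allI impI s)
      fix t assume t: "t \<noteq> \<theta> \<and> norm (t - \<theta>) < s"
      have td: "\<bar>t - \<theta>\<bar> \<le> d" using t by (simp add: s_def)
      have nz: "t - \<theta> \<noteq> 0" using t by simp
      have "(GG \<nu> h t - GG \<nu> h \<theta>) / (t - \<theta>) - GG \<nu> (\<lambda>x. x * h x) \<theta>
          = (GG \<nu> h t - GG \<nu> h \<theta> - (t - \<theta>) * GG \<nu> (\<lambda>x. x * h x) \<theta>) / (t - \<theta>)"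
        using nz by (simp add: field_simps)
      hence "norm ((GG \<nu> h t - GG \<nu> h \<theta>) / (t - \<theta>) - GG \<nu> (\<lambda>x. x * h x) \<theta>)
          = \<bar>GG \<nu> h t - GG \<nu> h \<theta> - (t - \<theta>) * GG \<nu> (\<lambda>x. x * h x) \<theta>\<bar> / \<bar>t - \<theta>\<bar>"
        by (simp add: abs_divide)
      also have "\<dots> \<le> (t - \<theta>)^2 * K / \<bar>t - \<theta>\<bar>"
        using est[OF td] nz by (simp add: divide_right_mono)
      also have "\<dots> = \<bar>t - \<theta>\<bar>^2 * K / \<bar>t - \<theta>\<bar>" by (simp only: power2_abs)
      also have "\<dots> = \<bar>t - \<theta>\<bar> * K"
      proof -
        have gen: "\<And>a::real. a > 0 \<Longrightarrow> a^2 * K / a = a * K" by (simp add: power2_eq_square)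
        show ?thesis by (rule gen) (use nz in simp)
      qed
      also have "\<dots> \<le> \<bar>t - \<theta>\<bar> * \<bar>K\<bar>" by (simp add: mult_left_mono)
      also have "\<dots> < r"
      proof -
        have "\<bar>t - \<theta>\<bar> < r / (\<bar>K\<bar> + 1)" using t by (simp add: s_def)
        hence "\<bar>t - \<theta>\<bar> * (\<bar>K\<bar> + 1) < r" by (simp add: field_simps)
        moreover have "\<bar>t - \<theta>\<bar> * \<bar>K\<bar> \<le> \<bar>t - \<theta>\<bar> * (\<bar>K\<bar> + 1)" by (rule mult_left_mono) simp_all
        ultimately show ?thesis by linarith
      qed
      finally show "norm ((GG \<nu> h t - GG \<nu> h \<theta>) / (t - \<theta>) - GG \<nu> (\<lambda>x. x * h x) \<theta>) < r" .
    qed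
  qed
qed

end


definition RR :: "real measure \<Rightarrow> (real \<Rightarrow> real) \<Rightarrow> real \<Rightarrow> real" where
  "RR \<nu> h = (\<lambda>t. GG \<nu> h t / GG \<nu> (\<lambda>_. 1) t)"

lemma lin3:
  fixes f g h :: "real \<Rightarrow> real"
  assumes "integrable \<mu> f" "integrable \<mu> g" "integrable \<mu> h"
  shows "integrable \<mu> (\<lambda>x. f x - \<alpha> * g x - \<beta> * h x)"
    "(\<integral>x. f x - \<alpha> * g x - \<beta> * h x \<partial>\<mu>) = (\<integral>x. f x \<partial>\<mu>) - \<alpha> * (\<integral>x. g x \<partial>\<mu>) - \<beta> * (\<integral>x. h x \<partial>\<mu>)"
proof -
  have a: "integrable \<mu> (\<lambda>x. \<alpha> * g x)" "integrable \<mu> (\<lambda>x. \<beta> * h x)" using assms by auto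
  have b: "integrable \<mu> (\<lambda>x. f x - \<alpha> * g x)" using assms(1) a(1) by (rule Bochner_Integration.integrable_diff)
  show "integrable \<mu> (\<lambda>x. f x - \<alpha> * g x - \<beta> * h x)" using b a(2) by (rule Bochner_Integration.integrable_diff)
  have "(\<integral>x. f x - \<alpha> * g x - \<beta> * h x \<partial>\<mu>) = (\<integral>x. f x - \<alpha> * g x \<partial>\<mu>) - (\<integral>x. \<beta> * h x \<partial>\<mu>)"
    using b a(2) by (rule Bochner_Integration.integral_diff)
  also have "(\<integral>x. f x - \<alpha> * g x \<partial>\<mu>) = (\<integral>x. f x \<partial>\<mu>) - (\<integral>x. \<alpha> * g x \<partial>\<mu>)"
    using assms(1) a(1) by (rule Bochner_Integration.integral_diff)
  finally show "(\<integral>x. f x - \<alpha> * g x - \<beta> * h x \<partial>\<mu>) = (\<integral>x. f x \<partial>\<mu>) - \<alpha> * (\<integral>x. g x \<partial>\<mu>) - \<beta> * (\<integral>x. h x \<partial>\<mu>)"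
    by simp
qed

context tiltctx
begin

lemma Y_eq: "tilt_Y \<nu> \<theta> = GG \<nu> (\<lambda>_. 1) \<theta>" by (simp add: tilt_Y_def GG_def)

lemma Y_pos: assumes th: "\<theta> \<in> I" shows "GG \<nu> (\<lambda>_. 1) \<theta> > 0"
proof -
  have i: "integrable \<nu> (\<lambda>x. exp (\<theta> * x))" using intexp th by blast
  have e: "GG \<nu> (\<lambda>_. 1) \<theta> = (\<integral>x. exp (\<theta> * x) \<partial>\<nu>)" by (simp add: GG_def)
  have nn: "(\<integral>x. exp (\<theta> * x) \<partial>\<nu>) \<ge> 0" by (simp add: integral_nonneg)
  have "(\<integral>x. exp (\<theta> * x) \<partial>\<nu>) \<noteq> 0"
  proof
    assume "(\<integral>x. exp (\<theta> * x) \<partial>\<nu>) = 0"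
    hence "AE x in \<nu>. exp (\<theta> * x) = 0" using integral_nonneg_eq_0_iff_AE[OF i] by simp
    hence "AE x in \<nu>. False" by simp
    thus False using prob_space.AE_const[OF prob, of False] by simp
  qed
  hence "(\<integral>x. exp (\<theta> * x) \<partial>\<nu>) > 0" using nn by linarith
  thus ?thesis using e by simp
qed

lemma tilt_dens_meas: "(\<lambda>x. exp (\<theta> * x) / tilt_Y \<nu> \<theta>) \<in> borel_measurable \<nu>"
  by (rule meas) measurable

lemma tilt_int:
  assumes g: "good h" and th: "\<theta> \<in> I"
  shows "integrable (tilt \<nu> \<theta>) h" "integral\<^sup>L (tilt \<nu> \<theta>) h = RR \<nu> h \<theta>"
proof -
  have hm: "h \<in> borel_measurable \<nu>" using g by (simp add: good_def meas)
  have nn: "AE x in \<nu>. 0 \<le> exp (\<theta> * x) / tilt_Y \<nu> \<theta>" using Y_pos[OF th] by (simp add: Y_eq)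
  have i: "integrable \<nu> (\<lambda>x. h x * exp (\<theta> * x))" using g th by (simp add: good_def)
  have eq: "(\<lambda>x. (exp (\<theta> * x) / tilt_Y \<nu> \<theta>) *\<^sub>R h x) = (\<lambda>x. h x * exp (\<theta> * x) / tilt_Y \<nu> \<theta>)"
    by (rule ext) simp
  show "integrable (tilt \<nu> \<theta>) h"
    unfolding tilt_def integrable_density[OF hm tilt_dens_meas nn] eq by (intro integrable_divide_zero i)
  show "integral\<^sup>L (tilt \<nu> \<theta>) h = RR \<nu> h \<theta>"
    unfolding tilt_def integral_density[OF hm tilt_dens_meas nn] eq RR_def GG_def
    by (simp add: tilt_Y_def)
qed

lemma tilt_int_rev:
  assumes th: "\<theta> \<in> I" and hb: "h \<in> borel_measurable borel" and it: "integrable (tilt \<nu> \<theta>) h"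
  shows "integrable \<nu> (\<lambda>x. h x * exp (\<theta> * x))"
proof -
  have hm: "h \<in> borel_measurable \<nu>" using hb by (simp add: meas)
  have nn: "AE x in \<nu>. 0 \<le> exp (\<theta> * x) / tilt_Y \<nu> \<theta>" using Y_pos[OF th] by (simp add: Y_eq)
  have "integrable \<nu> (\<lambda>x. (exp (\<theta> * x) / tilt_Y \<nu> \<theta>) *\<^sub>R h x)"
    using it unfolding tilt_def integrable_density[OF hm tilt_dens_meas nn] .
  hence "integrable \<nu> (\<lambda>x. tilt_Y \<nu> \<theta> * ((exp (\<theta> * x) / tilt_Y \<nu> \<theta>) *\<^sub>R h x))"
    by (intro integrable_mult_right)
  moreover have "(\<lambda>x. tilt_Y \<nu> \<theta> * ((exp (\<theta> * x) / tilt_Y \<nu> \<theta>) *\<^sub>R h x)) = (\<lambda>x. h x * exp (\<theta> * x))"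
    using Y_pos[OF th] by (intro ext) (simp add: Y_eq)
  ultimately show ?thesis by simp
qed

lemma tilt_AE:
  assumes th: "\<theta> \<in> I" and ae: "AE x in tilt \<nu> \<theta>. P x"
  shows "AE x in \<nu>. P x"
proof -
  have m: "(\<lambda>x. ennreal (exp (\<theta> * x) / tilt_Y \<nu> \<theta>)) \<in> borel_measurable \<nu>"
    using tilt_dens_meas by measurable
  have "AE x in \<nu>. 0 < ennreal (exp (\<theta> * x) / tilt_Y \<nu> \<theta>) \<longrightarrow> P x"
    using ae unfolding tilt_def AE_density[OF m] .
  moreover have "0 < ennreal (exp (\<theta> * x) / tilt_Y \<nu> \<theta>)" for x using Y_pos[OF th] by (simp add: Y_eq)
  ultimately show ?thesis by simp
qed

lemma RR_deriv:
  assumes g: "good h" and th: "\<theta> \<in> I"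
  shows "(RR \<nu> h has_real_derivative (RR \<nu> (\<lambda>x. x * h x) \<theta> - RR \<nu> h \<theta> * RR \<nu> (\<lambda>x. x) \<theta>)) (at \<theta>)"
proof -
  have d1: "(GG \<nu> h has_real_derivative GG \<nu> (\<lambda>x. x * h x) \<theta>) (at \<theta>)" by (rule G_deriv[OF g th])
  have d2: "(GG \<nu> (\<lambda>_. 1) has_real_derivative GG \<nu> (\<lambda>x. x) \<theta>) (at \<theta>)"
    using G_deriv[OF good_1 th] by simp
  have Y: "GG \<nu> (\<lambda>_. 1) \<theta> \<noteq> 0" using Y_pos[OF th] by simp
  have "((\<lambda>t. GG \<nu> h t / GG \<nu> (\<lambda>_. 1) t) has_real_derivative
     (GG \<nu> (\<lambda>x. x * h x) \<theta> * GG \<nu> (\<lambda>_. 1) \<theta> - GG \<nu> h \<theta> * GG \<nu> (\<lambda>x. x) \<theta>) /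
     (GG \<nu> (\<lambda>_. 1) \<theta> * GG \<nu> (\<lambda>_. 1) \<theta>)) (at \<theta>)"
    by (rule DERIV_divide[OF d1 d2 Y])
  moreover have "(GG \<nu> (\<lambda>x. x * h x) \<theta> * GG \<nu> (\<lambda>_. 1) \<theta> - GG \<nu> h \<theta> * GG \<nu> (\<lambda>x. x) \<theta>) /
     (GG \<nu> (\<lambda>_. 1) \<theta> * GG \<nu> (\<lambda>_. 1) \<theta>) = RR \<nu> (\<lambda>x. x * h x) \<theta> - RR \<nu> h \<theta> * RR \<nu> (\<lambda>x. x) \<theta>"
    unfolding RR_def using Y by (simp add: field_simps)
  ultimately show ?thesis unfolding RR_def by simp
qed

lemma prob_tilt: assumes th: "\<theta> \<in> I" shows "prob_space (tilt \<nu> \<theta>)"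
proof -
  have i1: "integrable (tilt \<nu> \<theta>) (\<lambda>_. 1::real)" using tilt_int(1)[OF good_1 th] .
  have v1: "integral\<^sup>L (tilt \<nu> \<theta>) (\<lambda>_. 1::real) = 1"
    using tilt_int(2)[OF good_1 th] Y_pos[OF th] by (simp add: RR_def)
  have fin: "emeasure (tilt \<nu> \<theta>) (space (tilt \<nu> \<theta>)) < \<infinity>"
    using i1 by (simp add: integrable_iff_bounded)
  interpret finite_measure "tilt \<nu> \<theta>" using fin by (intro finite_measureI) simp
  have "measure (tilt \<nu> \<theta>) (space (tilt \<nu> \<theta>)) = 1" using v1 by simp
  hence "emeasure (tilt \<nu> \<theta>) (space (tilt \<nu> \<theta>)) = 1" by (simp add: emeasure_eq_measure)
  thus ?thesis by (rule prob_spaceI)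
qed

end


lemma convex_minus_affine:
  fixes \<psi> :: "real \<Rightarrow> real"
  assumes "convex_on UNIV \<psi>"
  shows "convex_on UNIV (\<lambda>x. \<psi> x - A - c * x)"
  unfolding convex_on_def
proof (intro conjI ballI allI impI)
  show "convex (UNIV :: real set)" by simp
  fix x y :: real and u v :: real assume uv: "0 \<le> u" "0 \<le> v" "u + v = 1"
  have "\<psi> (u *\<^sub>R x + v *\<^sub>R y) \<le> u * \<psi> x + v * \<psi> y"
    using assms uv unfolding convex_on_def by blast
  moreover have "A = u * A + v * A" using uv(3) by (metis distrib_right mult_1)
  ultimately show "\<psi> (u *\<^sub>R x + v *\<^sub>R y) - A - c * (u *\<^sub>R x + v *\<^sub>R y)
      \<le> u * (\<psi> x - A - c * x) + v * (\<psi> y - A - c * y)"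
    by (simp add: algebra_simps)
qed

context tiltctx begin

lemma key_at:
  fixes \<psi> :: "real \<Rightarrow> real"
  assumes th: "\<theta> \<in> I" and gpsi: "good \<psi>" and cvx: "convex_on UNIV \<psi>"
    and nondeg: "\<not> (\<exists>c. AE x in \<nu>. x = c)"
  defines "a1 \<equiv> RR \<nu> (\<lambda>x. x) \<theta>" and "a2 \<equiv> RR \<nu> (\<lambda>x. x^2) \<theta>" and "a3 \<equiv> RR \<nu> (\<lambda>x. x^3) \<theta>"
    and "p0 \<equiv> RR \<nu> \<psi> \<theta>" and "p1 \<equiv> RR \<nu> (\<lambda>x. x * \<psi> x) \<theta>" and "p2 \<equiv> RR \<nu> (\<lambda>x. x^2 * \<psi> x) \<theta>"
  shows "a2 - a1 * a1 > 0"
    and "((p2 - p1 * a1) - ((p1 - p0 * a1) * a1 + (a2 - a1 * a1) * p0)) * (a2 - a1 * a1)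
         - (p1 - p0 * a1) * ((a3 - a2 * a1) - ((a2 - a1 * a1) * a1 + (a2 - a1 * a1) * a1)) \<ge> 0"
    and "\<not> (\<exists>a b. AE x in \<nu>. \<psi> x = a * x + b) \<Longrightarrow>
         ((p2 - p1 * a1) - ((p1 - p0 * a1) * a1 + (a2 - a1 * a1) * p0)) * (a2 - a1 * a1)
         - (p1 - p0 * a1) * ((a3 - a2 * a1) - ((a2 - a1 * a1) * a1 + (a2 - a1 * a1) * a1)) > 0"
proof -
  define \<mu> where "\<mu> = tilt \<nu> \<theta>"
  interpret P: prob_space \<mu> unfolding \<mu>_def by (rule prob_tilt[OF th])
  have gx: "good (\<lambda>x. x)" using good_x[OF good_1] by simp
  have gx2: "good (\<lambda>x. x^2)" using good_x[OF gx] by (simp add: power2_eq_square)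
  have e3: "(\<lambda>x::real. x * x^2) = (\<lambda>x. x^3)" by (rule ext) (simp add: power3_eq_cube power2_eq_square)
  have gx3: "good (\<lambda>x. x^3)" using good_x[OF gx2] unfolding e3 .
  have gp1: "good (\<lambda>x. x * \<psi> x)" using good_x[OF gpsi] .
  have ep2: "(\<lambda>x::real. x * (x * \<psi> x)) = (\<lambda>x. x^2 * \<psi> x)" by (rule ext) (simp add: power2_eq_square)
  have gp2: "good (\<lambda>x. x^2 * \<psi> x)" using good_x[OF gp1] unfolding ep2 .
  have i1: "integrable \<mu> (\<lambda>_. 1::real)" by simp
  have v1: "(\<integral>x. (1::real) \<partial>\<mu>) = 1" by (simp add: P.prob_space)
  have ix: "integrable \<mu> (\<lambda>x. x)" and vx: "(\<integral>x. x \<partial>\<mu>) = a1"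
    using tilt_int[OF gx th] by (simp_all add: \<mu>_def a1_def)
  have ix2: "integrable \<mu> (\<lambda>x. x^2)" and vx2: "(\<integral>x. x^2 \<partial>\<mu>) = a2"
    using tilt_int[OF gx2 th] by (simp_all add: \<mu>_def a2_def)
  have ix3: "integrable \<mu> (\<lambda>x. x^3)" and vx3: "(\<integral>x. x^3 \<partial>\<mu>) = a3"
    using tilt_int[OF gx3 th] by (simp_all add: \<mu>_def a3_def)
  have ip0: "integrable \<mu> \<psi>" and vp0: "(\<integral>x. \<psi> x \<partial>\<mu>) = p0"
    using tilt_int[OF gpsi th] by (simp_all add: \<mu>_def p0_def)
  have ip1: "integrable \<mu> (\<lambda>x. x * \<psi> x)" and vp1: "(\<integral>x. x * \<psi> x \<partial>\<mu>) = p1"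
    using tilt_int[OF gp1 th] by (simp_all add: \<mu>_def p1_def)
  have ip2: "integrable \<mu> (\<lambda>x. x^2 * \<psi> x)" and vp2: "(\<integral>x. x^2 * \<psi> x \<partial>\<mu>) = p2"
    using tilt_int[OF gp2 th] by (simp_all add: \<mu>_def p2_def)
  define V where "V = a2 - a1 * a1"
  have sqe: "(\<lambda>x. (x - a1)^2) = (\<lambda>x. x^2 - (2 * a1) * x - (- (a1 * a1)) * 1)"
    by (rule ext) (simp add: power2_eq_square algebra_simps)
  have isq: "integrable \<mu> (\<lambda>x. (x - a1)^2)" unfolding sqe by (rule lin3(1)[OF ix2 ix i1])
  have vsq: "(\<integral>x. (x - a1)^2 \<partial>\<mu>) = V"
    unfolding sqe using lin3(2)[OF ix2 ix i1, of "2 * a1" "- (a1 * a1)"] vx2 vx v1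
    by (simp add: V_def algebra_simps)
  have Vpos: "V > 0"
  proof (rule ccontr)
    assume "\<not> V > 0"
    moreover have "V \<ge> 0" using vsq[symmetric] by (simp add: integral_nonneg)
    ultimately have "(\<integral>x. (x - a1)^2 \<partial>\<mu>) = 0" using vsq by simp
    hence "AE x in \<mu>. (x - a1)^2 = 0" using integral_nonneg_eq_0_iff_AE[OF isq] by simp
    hence "AE x in \<mu>. x = a1" by simp
    hence "AE x in \<nu>. x = a1" using tilt_AE[OF th] unfolding \<mu>_def by blast
    thus False using nondeg by blast
  qed
  show "a2 - a1 * a1 > 0" using Vpos by (simp add: V_def)
  define F1 where "F1 = p1 - p0 * a1"
  define c where "c = F1 / V"
  have cV: "c * V = F1" using Vpos by (simp add: c_def)
  define \<phi> where "\<phi> x = \<psi> x - (p0 - c * a1) * 1 - c * x" for x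
  have phe0: "\<phi> = (\<lambda>x. \<psi> x - (p0 - c * a1) * 1 - c * x)" by (rule ext) (simp add: \<phi>_def)
  have phe1: "(\<lambda>x. \<phi> x * x) = (\<lambda>x. x * \<psi> x - (p0 - c * a1) * x - c * x^2)"
    by (rule ext) (simp add: \<phi>_def algebra_simps power2_eq_square)
  have phe2: "(\<lambda>x. \<phi> x * x^2) = (\<lambda>x. x^2 * \<psi> x - (p0 - c * a1) * x^2 - c * x^3)"
    by (rule ext) (simp add: \<phi>_def algebra_simps power2_eq_square power3_eq_cube)
  have iph0: "integrable \<mu> \<phi>" unfolding phe0 using lin3(1)[OF ip0 i1 ix] .
  have iph1: "integrable \<mu> (\<lambda>x. \<phi> x * x)" unfolding phe1 using lin3(1)[OF ip1 ix ix2] .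
  have iph2: "integrable \<mu> (\<lambda>x. \<phi> x * x^2)" unfolding phe2 using lin3(1)[OF ip2 ix2 ix3] .
  have eph0: "(\<integral>x. \<phi> x \<partial>\<mu>) = 0"
    unfolding phe0 lin3(2)[OF ip0 i1 ix] vp0 v1 vx by (simp add: algebra_simps)
  have eph1: "(\<integral>x. \<phi> x * x \<partial>\<mu>) = 0"
  proof -
    have "(\<integral>x. \<phi> x * x \<partial>\<mu>) = p1 - (p0 - c * a1) * a1 - c * a2"
      unfolding phe1 lin3(2)[OF ip1 ix ix2] vp1 vx vx2 ..
    also have "\<dots> = F1 - c * V" by (simp add: F1_def V_def algebra_simps)
    finally show ?thesis using cV by simp
  qed
  define J where "J = (\<integral>x. \<phi> x * x^2 \<partial>\<mu>)"
  have Jv: "J = p2 - (p0 - c * a1) * a2 - c * a3"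
    unfolding J_def phe2 lin3(2)[OF ip2 ix2 ix3] vp2 vx2 vx3 ..
  have cvph: "convex_on UNIV \<phi>" unfolding phe0 using convex_minus_affine[OF cvx, of "p0 - c * a1" c] by simp
  have alt: "(AE x in \<mu>. \<phi> x = 0) \<or> J > 0"
    unfolding J_def by (rule convex_moment_pos[OF cvph iph0 iph1 iph2 eph0 eph1])
  have NJ: "((p2 - p1 * a1) - ((p1 - p0 * a1) * a1 + (a2 - a1 * a1) * p0)) * (a2 - a1 * a1)
         - (p1 - p0 * a1) * ((a3 - a2 * a1) - ((a2 - a1 * a1) * a1 + (a2 - a1 * a1) * a1)) = V * J"
  proof -
    have "V * J = V * p2 - V * p0 * a2 + (c * V) * a1 * a2 - (c * V) * a3" unfolding Jv by algebra
    also have "\<dots> = V * p2 - V * p0 * a2 + F1 * a1 * a2 - F1 * a3" by (simp only: cV)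
    also have "\<dots> = ((p2 - p1 * a1) - ((p1 - p0 * a1) * a1 + (a2 - a1 * a1) * p0)) * (a2 - a1 * a1)
         - (p1 - p0 * a1) * ((a3 - a2 * a1) - ((a2 - a1 * a1) * a1 + (a2 - a1 * a1) * a1))"
      unfolding V_def F1_def by algebra
    finally show ?thesis by simp
  qed
  have Jnn: "J \<ge> 0"
  proof (cases "AE x in \<mu>. \<phi> x = 0")
    case True
    hence "AE x in \<mu>. \<phi> x * x^2 = 0" by (rule eventually_mono) simp
    hence "J = 0" unfolding J_def by (rule integral_eq_zero_AE)
    thus ?thesis by simp
  next
    case False thus ?thesis using alt by simp
  qed
  show "((p2 - p1 * a1) - ((p1 - p0 * a1) * a1 + (a2 - a1 * a1) * p0)) * (a2 - a1 * a1)
         - (p1 - p0 * a1) * ((a3 - a2 * a1) - ((a2 - a1 * a1) * a1 + (a2 - a1 * a1) * a1)) \<ge> 0"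
    unfolding NJ using Vpos Jnn by simp
  assume na: "\<not> (\<exists>a b. AE x in \<nu>. \<psi> x = a * x + b)"
  have "\<not> (AE x in \<mu>. \<phi> x = 0)"
  proof
    assume "AE x in \<mu>. \<phi> x = 0"
    hence "AE x in \<mu>. \<psi> x = c * x + (p0 - c * a1)" by (rule eventually_mono) (simp add: \<phi>_def algebra_simps)
    hence "AE x in \<nu>. \<psi> x = c * x + (p0 - c * a1)" using tilt_AE[OF th] unfolding \<mu>_def by blast
    thus False using na by blast
  qed
  hence "J > 0" using alt by simp
  show "((p2 - p1 * a1) - ((p1 - p0 * a1) * a1 + (a2 - a1 * a1) * p0)) * (a2 - a1 * a1)
         - (p1 - p0 * a1) * ((a3 - a2 * a1) - ((a2 - a1 * a1) * a1 + (a2 - a1 * a1) * a1)) > 0"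
    unfolding NJ using Vpos \<open>J > 0\<close> by simp
qed

end


lemma field_deriv_inverse_strong:
  fixes f g :: "real \<Rightarrow> real"
  shows "\<lbrakk>DERIV f x :> f'; f' \<noteq> 0; open S; x \<in> S; continuous_on S f;
         \<And>z. z \<in> S \<Longrightarrow> g (f z) = z\<rbrakk>
         \<Longrightarrow> DERIV g (f x) :> inverse (f')"
  unfolding has_field_derivative_def
  by (rule has_derivative_inverse_strong [of S x f g]) auto

theorem theoremA1:
  fixes \<nu> :: "real measure" and I :: "real set" and \<psi> :: "real \<Rightarrow> real"
  assumes "prob_space \<nu>"
    and "sets \<nu> = sets borel"
    and "\<not> (\<exists>c. AE x in \<nu>. x = c)"
    and "open I" and "is_interval I" and "I \<noteq> {}"
    and "\<forall>\<theta>\<in>I. integrable \<nu> (\<lambda>x. exp (\<theta> * x))"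
    and "\<psi> \<in> borel_measurable borel"
    and "\<forall>\<theta>\<in>I. integrable (tilt \<nu> \<theta>) \<psi>"
  shows "(convex_on UNIV \<psi> \<longrightarrow> convex_on (tilt_mean \<nu> ` I) (tilt_Psi \<nu> I \<psi>))
       \<and> (convex_on UNIV \<psi> \<and> \<not> (\<exists>a b. AE x in \<nu>. \<psi> x = a * x + b) \<longrightarrow>
           (\<exists>\<Psi>' \<Psi>''.
              (\<forall>r\<in>tilt_mean \<nu> ` I. (tilt_Psi \<nu> I \<psi> has_real_derivative \<Psi>' r) (at r)) \<and>
              (\<forall>r\<in>tilt_mean \<nu> ` I. (\<Psi>' has_real_derivative \<Psi>'' r) (at r)) \<and>
              (\<forall>r\<in>tilt_mean \<nu> ` I. \<Psi>'' r > 0))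
           \<and> strictly_convex_on (tilt_mean \<nu> ` I) (tilt_Psi \<nu> I \<psi>))"
proof -
  interpret T: tiltctx \<nu> I by (rule tiltctx.intro[OF assms(1,2,4,7)])
  have gpsi: "T.good \<psi>" unfolding T.good_def
  proof (intro conjI ballI)
    show "\<psi> \<in> borel_measurable borel" by (rule assms(8))
    fix \<theta> assume th: "\<theta> \<in> I"
    show "integrable \<nu> (\<lambda>x. \<psi> x * exp (\<theta> * x))"
      by (rule T.tilt_int_rev[OF th assms(8)]) (use assms(9) th in blast)
  qed
  have gx: "T.good (\<lambda>x. x)" using T.good_x[OF T.good_1] by simp
  have ex2: "(\<lambda>x::real. x * x) = (\<lambda>x. x^2)" by (rule ext) (simp add: power2_eq_square)
  have gx2: "T.good (\<lambda>x. x^2)" using T.good_x[OF gx] unfolding ex2 .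
  have e3: "(\<lambda>x::real. x * x^2) = (\<lambda>x. x^3)" by (rule ext) (simp add: power3_eq_cube power2_eq_square)
  have gp1: "T.good (\<lambda>x. x * \<psi> x)" using T.good_x[OF gpsi] .
  have ep2: "(\<lambda>x::real. x * (x * \<psi> x)) = (\<lambda>x. x^2 * \<psi> x)" by (rule ext) (simp add: power2_eq_square)
  define a1 where "a1 = RR \<nu> (\<lambda>x. x)"
  define a2 where "a2 = RR \<nu> (\<lambda>x. x^2)"
  define a3 where "a3 = RR \<nu> (\<lambda>x. x^3)"
  define p0 where "p0 = RR \<nu> \<psi>"
  define p1 where "p1 = RR \<nu> (\<lambda>x. x * \<psi> x)"
  define p2 where "p2 = RR \<nu> (\<lambda>x. x^2 * \<psi> x)"
  define V where "V = (\<lambda>t. a2 t - a1 t * a1 t)"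
  define F1 where "F1 = (\<lambda>t. p1 t - p0 t * a1 t)"
  define dV where "dV = (\<lambda>t. (a3 t - a2 t * a1 t) - ((a2 t - a1 t * a1 t) * a1 t + (a2 t - a1 t * a1 t) * a1 t))"
  define dF1 where "dF1 = (\<lambda>t. (p2 t - p1 t * a1 t) - ((p1 t - p0 t * a1 t) * a1 t + (a2 t - a1 t * a1 t) * p0 t))"
  define g where "g = the_inv_into I (tilt_mean \<nu>)"
  define Q where "Q = (\<lambda>t. F1 t / V t)"
  define dQ where "dQ = (\<lambda>t. (dF1 t * V t - F1 t * dV t) / (V t * V t))"
  define \<Psi>1 where "\<Psi>1 = (\<lambda>r. Q (g r))"
  define \<Psi>2 where "\<Psi>2 = (\<lambda>r. dQ (g r) * inverse (V (g r)))"
  define F where "F = (\<lambda>t. \<integral>x. \<psi> x \<partial>tilt \<nu> t)"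
  have da1: "(a1 has_real_derivative (a2 \<theta> - a1 \<theta> * a1 \<theta>)) (at \<theta>)" if th: "\<theta> \<in> I" for \<theta>
    using T.RR_deriv[OF gx th] unfolding a1_def a2_def ex2 .
  have da2: "(a2 has_real_derivative (a3 \<theta> - a2 \<theta> * a1 \<theta>)) (at \<theta>)" if th: "\<theta> \<in> I" for \<theta>
    using T.RR_deriv[OF gx2 th] unfolding a1_def a2_def a3_def e3 .
  have dp0: "(p0 has_real_derivative (p1 \<theta> - p0 \<theta> * a1 \<theta>)) (at \<theta>)" if th: "\<theta> \<in> I" for \<theta>
    using T.RR_deriv[OF gpsi th] unfolding a1_def p0_def p1_def .
  have dp1: "(p1 has_real_derivative (p2 \<theta> - p1 \<theta> * a1 \<theta>)) (at \<theta>)" if th: "\<theta> \<in> I" for \<theta>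
    using T.RR_deriv[OF gp1 th] unfolding a1_def p1_def p2_def ep2 .
  have dVd: "(V has_real_derivative dV \<theta>) (at \<theta>)" if th: "\<theta> \<in> I" for \<theta>
    unfolding V_def dV_def by (rule DERIV_diff[OF da2[OF th] DERIV_mult[OF da1[OF th] da1[OF th]]])
  have dF1d: "(F1 has_real_derivative dF1 \<theta>) (at \<theta>)" if th: "\<theta> \<in> I" for \<theta>
    unfolding F1_def dF1_def by (rule DERIV_diff[OF dp1[OF th] DERIV_mult[OF dp0[OF th] da1[OF th]]])
  have ma1: "tilt_mean \<nu> \<theta> = a1 \<theta>" if th: "\<theta> \<in> I" for \<theta>
    using T.tilt_int(2)[OF gx th] unfolding tilt_mean_def a1_def .
  have Fp0: "F \<theta> = p0 \<theta>" if th: "\<theta> \<in> I" for \<theta>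
    using T.tilt_int(2)[OF gpsi th] unfolding F_def p0_def .
  have dm: "(tilt_mean \<nu> has_real_derivative V \<theta>) (at \<theta>)" if th: "\<theta> \<in> I" for \<theta>
  proof -
    have "(a1 has_real_derivative V \<theta>) (at \<theta>)" using da1[OF th] unfolding V_def by simp
    thus ?thesis by (rule has_field_derivative_transform_within_open[OF _ assms(4) th]) (simp add: ma1)
  qed
  have dF: "(F has_real_derivative F1 \<theta>) (at \<theta>)" if th: "\<theta> \<in> I" for \<theta>
  proof -
    have "(p0 has_real_derivative F1 \<theta>) (at \<theta>)" using dp0[OF th] unfolding F1_def by simp
    thus ?thesis by (rule has_field_derivative_transform_within_open[OF _ assms(4) th]) (simp add: Fp0)
  qed
  have contm: "continuous_on I (tilt_mean \<nu>)"
  proof (subst continuous_on_eq_continuous_at[OF assms(4)], intro ballI)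
    fix \<theta> assume "\<theta> \<in> I" thus "isCont (tilt_mean \<nu>) \<theta>" by (rule DERIV_isCont[OF dm])
  qed
  have psi_eq: "tilt_Psi \<nu> I \<psi> = (\<lambda>r. F (g r))"
    by (rule ext) (simp add: tilt_Psi_def F_def g_def)
  have convC: "convex (tilt_mean \<nu> ` I)"
  proof -
    have "connected I" using assms(5) is_interval_connected_1 by blast
    hence "connected (tilt_mean \<nu> ` I)" by (rule connected_continuous_image[OF contm])
    thus ?thesis using is_interval_connected_1 is_interval_convex_1 by blast
  qed
  have core: "(\<forall>r\<in>tilt_mean \<nu> ` I. (tilt_Psi \<nu> I \<psi> has_real_derivative \<Psi>1 r) (at r)) \<and>
              (\<forall>r\<in>tilt_mean \<nu> ` I. (\<Psi>1 has_real_derivative \<Psi>2 r) (at r)) \<and>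
              (\<forall>r\<in>tilt_mean \<nu> ` I. \<Psi>2 r \<ge> 0) \<and>
              (\<not> (\<exists>a b. AE x in \<nu>. \<psi> x = a * x + b) \<longrightarrow> (\<forall>r\<in>tilt_mean \<nu> ` I. \<Psi>2 r > 0))"
    if cvx: "convex_on UNIV \<psi>"
  proof -
    have Vpos: "V \<theta> > 0" if th: "\<theta> \<in> I" for \<theta>
      using T.key_at(1)[OF th gpsi cvx assms(3)] unfolding V_def a1_def a2_def .
    have N0: "dF1 \<theta> * V \<theta> - F1 \<theta> * dV \<theta> \<ge> 0" if th: "\<theta> \<in> I" for \<theta>
      unfolding dF1_def V_def F1_def dV_def a1_def a2_def a3_def p0_def p1_def p2_def
      by (rule T.key_at(2)[OF th gpsi cvx assms(3)])
    have N1: "dF1 \<theta> * V \<theta> - F1 \<theta> * dV \<theta> > 0"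
      if th: "\<theta> \<in> I" and na: "\<not> (\<exists>a b. AE x in \<nu>. \<psi> x = a * x + b)" for \<theta>
      unfolding dF1_def V_def F1_def dV_def a1_def a2_def a3_def p0_def p1_def p2_def
      by (rule T.key_at(3)[OF th gpsi cvx assms(3) na])
    have incr: "tilt_mean \<nu> a < tilt_mean \<nu> b" if "a \<in> I" "b \<in> I" "a < b" for a b
    proof (rule DERIV_pos_imp_increasing[OF \<open>a < b\<close>])
      fix x assume "a \<le> x" "x \<le> b"
      have ii: "\<forall>a\<in>I. \<forall>b\<in>I. \<forall>x. a \<le> x \<and> x \<le> b \<longrightarrow> x \<in> I" using assms(5) unfolding is_interval_1 .
      have xI: "x \<in> I" using ii \<open>a \<in> I\<close> \<open>b \<in> I\<close> \<open>a \<le> x\<close> \<open>x \<le> b\<close> by blast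
      show "\<exists>y. (tilt_mean \<nu> has_real_derivative y) (at x) \<and> 0 < y"
        using dm[OF xI] Vpos[OF xI] by blast
    qed
    have injm: "inj_on (tilt_mean \<nu>) I"
    proof (rule inj_onI)
      fix x y assume xy: "x \<in> I" "y \<in> I" "tilt_mean \<nu> x = tilt_mean \<nu> y"
      show "x = y"
      proof (rule linorder_cases[of x y])
        assume "x < y" thus ?thesis using incr[OF xy(1,2)] xy(3) by simp
      next
        assume "y < x" thus ?thesis using incr[OF xy(2,1)] xy(3) by simp
      qed
    qed
    have gm: "g (tilt_mean \<nu> z) = z" if "z \<in> I" for z
      unfolding g_def by (rule the_inv_into_f_f[OF injm that])
    have dg: "(g has_real_derivative inverse (V \<theta>)) (at (tilt_mean \<nu> \<theta>))" if th: "\<theta> \<in> I" for \<theta>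
      using Vpos[OF th] by (intro field_deriv_inverse_strong[OF dm[OF th] _ assms(4) th contm gm]) simp_all
    have dPsi: "(tilt_Psi \<nu> I \<psi> has_real_derivative \<Psi>1 (tilt_mean \<nu> \<theta>)) (at (tilt_mean \<nu> \<theta>))"
      if th: "\<theta> \<in> I" for \<theta>
    proof -
      have "(F has_real_derivative F1 \<theta>) (at (g (tilt_mean \<nu> \<theta>)))" using dF[OF th] gm[OF th] by simp
      from DERIV_chain2[OF this dg[OF th]]
      have "((\<lambda>r. F (g r)) has_real_derivative F1 \<theta> * inverse (V \<theta>)) (at (tilt_mean \<nu> \<theta>))" .
      moreover have "F1 \<theta> * inverse (V \<theta>) = \<Psi>1 (tilt_mean \<nu> \<theta>)"
        by (simp add: \<Psi>1_def Q_def gm[OF th] divide_inverse)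
      ultimately show ?thesis unfolding psi_eq by simp
    qed
    have dQd: "(Q has_real_derivative dQ \<theta>) (at \<theta>)" if th: "\<theta> \<in> I" for \<theta>
    proof -
      have "V \<theta> \<noteq> 0" using Vpos[OF th] by simp
      thus ?thesis unfolding Q_def dQ_def by (rule DERIV_divide[OF dF1d[OF th] dVd[OF th]])
    qed
    have dPsi1: "(\<Psi>1 has_real_derivative \<Psi>2 (tilt_mean \<nu> \<theta>)) (at (tilt_mean \<nu> \<theta>))"
      if th: "\<theta> \<in> I" for \<theta>
    proof -
      have "(Q has_real_derivative dQ \<theta>) (at (g (tilt_mean \<nu> \<theta>)))" using dQd[OF th] gm[OF th] by simp
      from DERIV_chain2[OF this dg[OF th]]
      have "((\<lambda>r. Q (g r)) has_real_derivative dQ \<theta> * inverse (V \<theta>)) (at (tilt_mean \<nu> \<theta>))" .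
      moreover have "dQ \<theta> * inverse (V \<theta>) = \<Psi>2 (tilt_mean \<nu> \<theta>)"
        by (simp add: \<Psi>2_def gm[OF th])
      ultimately show ?thesis unfolding \<Psi>1_def by simp
    qed
    have Psi2_eq: "\<Psi>2 (tilt_mean \<nu> \<theta>) = (dF1 \<theta> * V \<theta> - F1 \<theta> * dV \<theta>) / (V \<theta> * V \<theta> * V \<theta>)"
      if th: "\<theta> \<in> I" for \<theta>
      using Vpos[OF th] by (simp add: \<Psi>2_def dQ_def gm[OF th] divide_inverse mult.assoc)
    have V3: "V \<theta> * V \<theta> * V \<theta> > 0" if th: "\<theta> \<in> I" for \<theta> using Vpos[OF th] by simp
    show ?thesis
    proof (intro conjI impI ballI)
      fix r assume "r \<in> tilt_mean \<nu> ` I"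
      then obtain \<theta> where th: "\<theta> \<in> I" and r: "r = tilt_mean \<nu> \<theta>" by blast
      show "(tilt_Psi \<nu> I \<psi> has_real_derivative \<Psi>1 r) (at r)" unfolding r by (rule dPsi[OF th])
      show "(\<Psi>1 has_real_derivative \<Psi>2 r) (at r)" unfolding r by (rule dPsi1[OF th])
      show "\<Psi>2 r \<ge> 0" unfolding r Psi2_eq[OF th] using N0[OF th] V3[OF th] by simp
    next
      fix r assume na: "\<not> (\<exists>a b. AE x in \<nu>. \<psi> x = a * x + b)" and "r \<in> tilt_mean \<nu> ` I"
      then obtain \<theta> where th: "\<theta> \<in> I" and r: "r = tilt_mean \<nu> \<theta>" by blast
      show "\<Psi>2 r > 0" unfolding r Psi2_eq[OF th] using N1[OF th na] V3[OF th] by simp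
    qed
  qed
  show ?thesis
  proof (intro conjI impI)
    assume cvx: "convex_on UNIV \<psi>"
    note c = core[OF cvx]
    have A: "\<forall>r\<in>tilt_mean \<nu> ` I. (tilt_Psi \<nu> I \<psi> has_real_derivative \<Psi>1 r) (at r)" using c by (rule conjunct1)
    have B: "\<forall>r\<in>tilt_mean \<nu> ` I. (\<Psi>1 has_real_derivative \<Psi>2 r) (at r)" using c[THEN conjunct2] by (rule conjunct1)
    have C0: "\<forall>r\<in>tilt_mean \<nu> ` I. \<Psi>2 r \<ge> 0" using c[THEN conjunct2, THEN conjunct2] by (rule conjunct1)
    show "convex_on (tilt_mean \<nu> ` I) (tilt_Psi \<nu> I \<psi>)"
      by (rule f''_ge0_imp_convex[OF convC A[rule_format] B[rule_format] C0[rule_format]])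
  next
    assume h: "convex_on UNIV \<psi> \<and> \<not> (\<exists>a b. AE x in \<nu>. \<psi> x = a * x + b)"
    note c = core[OF h[THEN conjunct1]]
    have A: "\<forall>r\<in>tilt_mean \<nu> ` I. (tilt_Psi \<nu> I \<psi> has_real_derivative \<Psi>1 r) (at r)" using c by (rule conjunct1)
    have B: "\<forall>r\<in>tilt_mean \<nu> ` I. (\<Psi>1 has_real_derivative \<Psi>2 r) (at r)" using c[THEN conjunct2] by (rule conjunct1)
    have pos: "\<forall>r\<in>tilt_mean \<nu> ` I. \<Psi>2 r > 0"
      using c[THEN conjunct2, THEN conjunct2, THEN conjunct2] h[THEN conjunct2] by (rule mp)
    show "\<exists>\<Psi>' \<Psi>''.
              (\<forall>r\<in>tilt_mean \<nu> ` I. (tilt_Psi \<nu> I \<psi> has_real_derivative \<Psi>' r) (at r)) \<and>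
              (\<forall>r\<in>tilt_mean \<nu> ` I. (\<Psi>' has_real_derivative \<Psi>'' r) (at r)) \<and>
              (\<forall>r\<in>tilt_mean \<nu> ` I. \<Psi>'' r > 0)"
      by (intro exI[of _ \<Psi>1] exI[of _ \<Psi>2] conjI A B pos)
    show "strictly_convex_on (tilt_mean \<nu> ` I) (tilt_Psi \<nu> I \<psi>)"
      by (rule strict_convex_from_f''[OF convC A[rule_format] B[rule_format] pos[rule_format]])
  qed
qed


end
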